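(* There are no semi-real quaternionic rectifying curves lying fully in $\mathcal{Q}_v$ whose curvatures $\kappa(s)$, $k(s)$ and $(r-\varepsilon_t\varepsilon_T\varepsilon_{N_1}\kappa)(s)$ are all non-zero constants.
   Context: $\mathcal{Q}_v$ denotes the semi-real quaternions, identified with the semi-Euclidean space $\mathbb{R}^4_2$ with inner product $h(p,q)=p_1q_1+p_2q_2-p_3q_3-p_4q_4$. For a unit speed semi-real quaternionic curve $\beta$ (i.e. $h(T,T)=\varepsilon_T=\pm1$, $T=\beta'$) with non-null Serret–Frenet frame $\{T,N_1,N_2,N_3\}$ the Frenet equations are $T'=\varepsilon_{N_1}\kappa N_1$, $N_1'=-\varepsilon_t\varepsilon_{N_1}\kappa T+\varepsilon_{n_1}kN_2$, $N_2'=-\varepsilon_t kN_1+\varepsilon_{n_1}(r-\varepsilon_t\varepsilon_T\varepsilon_{N_1}\kappa)N_3$, $N_3'=-\varepsilon_{n_2}(r-\varepsilon_t\varepsilon_T\varepsilon_{N_1}\kappa)N_2$, where $\kappa$ is the principal curvature of $\beta$, $k$ and $r$ are the curvature and torsion of the associated spatial quaternionic curve in $\mathbb{R}^3_1$ with frame signs $\varepsilon_t,\varepsilon_{n_1},\varepsilon_{n_2}\in\{\pm1\}$, and $h(N_1,N_1)=\varepsilon_{N_1}$, $h(N_2,N_2)=\varepsilon_{n_1}\varepsilon_T$, $h(N_3,N_3)=\varepsilon_{n_2}\varepsilon_T$. $\beta$ is a semi-real quaternionic rectifying curve if $\beta(s)=\lambda(s)T(s)+\mu(s)N_2(s)+\nu(s)N_3(s)$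 for some differentiable functions $\lambda,\mu,\nu$. *)

theory Defs
  imports "HOL-Analysis.Analysis"
begin

text \<open>Semi-real quaternions Q_v identified with semi-Euclidean space R^4_2.\<close>

definition sr_h :: "real^4 \<Rightarrow> real^4 \<Rightarrow> real" where
  "sr_h p q = p$1 * q$1 + p$2 * q$2 - p$3 * q$3 - p$4 * q$4"

definition is_sign :: "real \<Rightarrow> bool" where
  "is_sign e \<longleftrightarrow> e = 1 \<or> e = -1"

text \<open>Unit speed semi-real quaternionic curve beta on the open interval I with
  non-null Serret--Frenet frame {T,N1,N2,N3}, principal curvature kappa, and
  curvature k and torsion r (of the associated spatial quaternionic curve) with
  frame signs et, en1, en2.\<close>

definition sr_frenet_curve ::
  "real set \<Rightarrow> (real \<Rightarrow> real^4) \<Rightarrow> (real \<Rightarrow> real^4) \<Rightarrow> (real \<Rightarrow> real^4) \<Rightarrow>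
   (real \<Rightarrow> real^4) \<Rightarrow> (real \<Rightarrow> real^4) \<Rightarrow> (real \<Rightarrow> real) \<Rightarrow> (real \<Rightarrow> real) \<Rightarrow>
   (real \<Rightarrow> real) \<Rightarrow> real \<Rightarrow> real \<Rightarrow> real \<Rightarrow> real \<Rightarrow> real \<Rightarrow> bool" where
  "sr_frenet_curve I \<beta> T N1 N2 N3 \<kappa> k r eT eN1 et en1 en2 \<longleftrightarrow>
     is_sign eT \<and> is_sign eN1 \<and> is_sign et \<and> is_sign en1 \<and> is_sign en2 \<and>
     (\<forall>s\<in>I.
        (\<beta> has_vector_derivative T s) (at s) \<and>
        sr_h (T s) (T s) = eT \<and>
        sr_h (N1 s) (N1 s) = eN1 \<and>
        sr_h (N2 s) (N2 s) = en1 * eT \<and>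
        sr_h (N3 s) (N3 s) = en2 * eT \<and>
        sr_h (T s) (N1 s) = 0 \<and> sr_h (T s) (N2 s) = 0 \<and> sr_h (T s) (N3 s) = 0 \<and>
        sr_h (N1 s) (N2 s) = 0 \<and> sr_h (N1 s) (N3 s) = 0 \<and> sr_h (N2 s) (N3 s) = 0 \<and>
        (T has_vector_derivative (eN1 * \<kappa> s) *\<^sub>R N1 s) (at s) \<and>
        (N1 has_vector_derivative
           ((- et * eN1 * \<kappa> s) *\<^sub>R T s + (en1 * k s) *\<^sub>R N2 s)) (at s) \<and>
        (N2 has_vector_derivative
           ((- et * k s) *\<^sub>R N1 s
            + (en1 * (r s - et * eT * eN1 * \<kappa> s)) *\<^sub>R N3 s)) (at s) \<and>
        (N3 has_vector_derivative
           ((- en2 * (r s - et * eT * eN1 * \<kappa> s)) *\<^sub>R N2 s)) (at s))"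

definition sr_rectifying ::
  "real set \<Rightarrow> (real \<Rightarrow> real^4) \<Rightarrow> (real \<Rightarrow> real^4) \<Rightarrow> (real \<Rightarrow> real^4) \<Rightarrow>
   (real \<Rightarrow> real^4) \<Rightarrow> bool" where
  "sr_rectifying I \<beta> T N2 N3 \<longleftrightarrow>
     (\<exists>la mu nu :: real \<Rightarrow> real.
        (\<forall>s\<in>I. la differentiable (at s) \<and> mu differentiable (at s) \<and> nu differentiable (at s)) \<and>
        (\<forall>s\<in>I. \<beta> s = la s *\<^sub>R T s + mu s *\<^sub>R N2 s + nu s *\<^sub>R N3 s))"

end

theory Submission
  imports Defs
begin

lemma sr_h_add_left: "sr_h (x + y) z = sr_h x z + sr_h y z"
  by (simp add: sr_h_def algebra_simps)
lemma sr_h_scale_left: "sr_h (c *\<^sub>R x) z = c * sr_h x z"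
  by (simp add: sr_h_def algebra_simps)
lemma sr_h_add_right: "sr_h z (x + y) = sr_h z x + sr_h z y"
  by (simp add: sr_h_def algebra_simps)
lemma sr_h_scale_right: "sr_h z (c *\<^sub>R x) = c * sr_h z x"
  by (simp add: sr_h_def algebra_simps)
lemma sr_h_diff_left: "sr_h (x - y) z = sr_h x z - sr_h y z"
  by (simp add: sr_h_def algebra_simps)
lemma sr_h_diff_right: "sr_h z (x - y) = sr_h z x - sr_h z y"
  by (simp add: sr_h_def algebra_simps)
lemma sr_h_sym: "sr_h x y = sr_h y x"
  by (simp add: sr_h_def algebra_simps)
lemma sr_h_neg_left: "sr_h (- x) z = - sr_h x z"
  by (simp add: sr_h_def algebra_simps)

lemma sign_sq: "is_sign e \<Longrightarrow> e * e = 1" "is_sign e \<Longrightarrow> e \<noteq> 0"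
  by (auto simp: is_sign_def)

theorem corollary4p1:
  fixes a b :: real
    and \<beta> T N1 N2 N3 :: "real \<Rightarrow> real^4"
    and \<kappa> k r :: "real \<Rightarrow> real"
    and eT eN1 et en1 en2 :: real
  assumes "a < b"
    and "sr_frenet_curve {a<..<b} \<beta> T N1 N2 N3 \<kappa> k r eT eN1 et en1 en2"
    and "sr_rectifying {a<..<b} \<beta> T N2 N3"
  shows "\<not> (\<exists>c1 c2 c3. c1 \<noteq> 0 \<and> c2 \<noteq> 0 \<and> c3 \<noteq> 0 \<and>
            (\<forall>s\<in>{a<..<b}. \<kappa> s = c1 \<and> k s = c2 \<and>
                             r s - et * eT * eN1 * \<kappa> s = c3))"
proof
  assume "\<exists>c1 c2 c3. c1 \<noteq> 0 \<and> c2 \<noteq> 0 \<and> c3 \<noteq> 0 \<and>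
            (\<forall>s\<in>{a<..<b}. \<kappa> s = c1 \<and> k s = c2 \<and>
                             r s - et * eT * eN1 * \<kappa> s = c3)"
  then obtain c1 c2 c3 where c: "c1 \<noteq> 0" "c2 \<noteq> 0" "c3 \<noteq> 0"
    and cs: "\<And>s. s\<in>{a<..<b} \<Longrightarrow> \<kappa> s = c1 \<and> k s = c2 \<and> r s - et * eT * eN1 * \<kappa> s = c3"
    by blast
  define I where "I = {a<..<b}"
  have oI: "open I" by (simp add: I_def)
  note F = assms(2)[unfolded sr_frenet_curve_def, folded I_def]
  have sg: "is_sign eT" "is_sign eN1" "is_sign et" "is_sign en1" "is_sign en2" using F by auto
  obtain la mu nu :: "real \<Rightarrow> real" where
    dif: "\<And>s. s\<in>I \<Longrightarrow> la differentiable (at s) \<and> mu differentiable (at s) \<and> nu differentiable (at s)"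
    and rep: "\<And>s. s\<in>I \<Longrightarrow> \<beta> s = la s *\<^sub>R T s + mu s *\<^sub>R N2 s + nu s *\<^sub>R N3 s"
    using assms(3) unfolding sr_rectifying_def I_def by blast
  have key: "deriv la s = 1 \<and> la s * eN1 * c1 - mu s * et * c2 = 0 \<and>
      deriv mu s = nu s * en2 * c3 \<and> mu s * en1 * c3 + deriv nu s = 0" if s: "s \<in> I" for s
  proof -
    from F s have Fs: "(\<beta> has_vector_derivative T s) (at s)"
        "sr_h (T s) (T s) = eT" "sr_h (N1 s) (N1 s) = eN1"
        "sr_h (N2 s) (N2 s) = en1 * eT" "sr_h (N3 s) (N3 s) = en2 * eT"
        "sr_h (T s) (N1 s) = 0" "sr_h (T s) (N2 s) = 0" "sr_h (T s) (N3 s) = 0"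
        "sr_h (N1 s) (N2 s) = 0" "sr_h (N1 s) (N3 s) = 0" "sr_h (N2 s) (N3 s) = 0"
        "(T has_vector_derivative (eN1 * \<kappa> s) *\<^sub>R N1 s) (at s)"
        "(N2 has_vector_derivative
           ((- et * k s) *\<^sub>R N1 s + (en1 * (r s - et * eT * eN1 * \<kappa> s)) *\<^sub>R N3 s)) (at s)"
        "(N3 has_vector_derivative ((- en2 * (r s - et * eT * eN1 * \<kappa> s)) *\<^sub>R N2 s)) (at s)"
      by auto
    have cs': "\<kappa> s = c1" "k s = c2" "r s - et * eT * eN1 * \<kappa> s = c3" using cs s I_def by auto
    have dl: "(la has_field_derivative deriv la s) (at s)"
      and dm: "(mu has_field_derivative deriv mu s) (at s)"
      and dn: "(nu has_field_derivative deriv nu s) (at s)"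
      using dif[OF s] DERIV_deriv_iff_real_differentiable by blast+
    have "((\<lambda>s. la s *\<^sub>R T s + mu s *\<^sub>R N2 s + nu s *\<^sub>R N3 s) has_vector_derivative
        (la s *\<^sub>R ((eN1 * \<kappa> s) *\<^sub>R N1 s) + deriv la s *\<^sub>R T s)
      + (mu s *\<^sub>R ((- et * k s) *\<^sub>R N1 s + (en1 * (r s - et * eT * eN1 * \<kappa> s)) *\<^sub>R N3 s) + deriv mu s *\<^sub>R N2 s)
      + (nu s *\<^sub>R ((- en2 * (r s - et * eT * eN1 * \<kappa> s)) *\<^sub>R N2 s) + deriv nu s *\<^sub>R N3 s)) (at s)"
      by (intro has_vector_derivative_add has_vector_derivative_scaleR dl dm dn Fs)
    then have "(\<beta> has_vector_derivative
        (la s *\<^sub>R ((eN1 * \<kappa> s) *\<^sub>R N1 s) + deriv la s *\<^sub>R T s)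
      + (mu s *\<^sub>R ((- et * k s) *\<^sub>R N1 s + (en1 * (r s - et * eT * eN1 * \<kappa> s)) *\<^sub>R N3 s) + deriv mu s *\<^sub>R N2 s)
      + (nu s *\<^sub>R ((- en2 * (r s - et * eT * eN1 * \<kappa> s)) *\<^sub>R N2 s) + deriv nu s *\<^sub>R N3 s)) (at s)"
      by (rule has_vector_derivative_transform_within_open[OF _ oI s]) (simp add: rep)
    then have E: "T s = (la s *\<^sub>R ((eN1 * \<kappa> s) *\<^sub>R N1 s) + deriv la s *\<^sub>R T s)
      + (mu s *\<^sub>R ((- et * k s) *\<^sub>R N1 s + (en1 * (r s - et * eT * eN1 * \<kappa> s)) *\<^sub>R N3 s) + deriv mu s *\<^sub>R N2 s)
      + (nu s *\<^sub>R ((- en2 * (r s - et * eT * eN1 * \<kappa> s)) *\<^sub>R N2 s) + deriv nu s *\<^sub>R N3 s)"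
      by (rule vector_derivative_unique_at[OF Fs(1)])
    have o: "sr_h (N1 s) (T s) = 0" "sr_h (N2 s) (T s) = 0" "sr_h (N3 s) (T s) = 0"
        "sr_h (N2 s) (N1 s) = 0" "sr_h (N3 s) (N1 s) = 0" "sr_h (N3 s) (N2 s) = 0"
      using Fs sr_h_sym by metis+
    have h1: "sr_h (T s) (T s) = deriv la s * eT"
      by (subst (2) E) (simp add: sr_h_add_left sr_h_scale_left sr_h_add_right sr_h_scale_right sr_h_diff_left sr_h_diff_right o Fs)
    have h2: "sr_h (T s) (N1 s) = (la s * eN1 * \<kappa> s - mu s * et * k s) * eN1"
      by (subst E) (simp add: sr_h_add_left sr_h_scale_left sr_h_add_right sr_h_scale_right sr_h_diff_left sr_h_diff_right o Fs algebra_simps)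
    have h3: "sr_h (T s) (N2 s) = (deriv mu s - nu s * en2 * (r s - et * eT * eN1 * \<kappa> s)) * (en1 * eT)"
      by (subst E) (simp add: sr_h_add_left sr_h_scale_left sr_h_add_right sr_h_scale_right sr_h_diff_left sr_h_diff_right o Fs algebra_simps)
    have h4: "sr_h (T s) (N3 s) = (mu s * en1 * (r s - et * eT * eN1 * \<kappa> s) + deriv nu s) * (en2 * eT)"
      by (subst E) (simp add: sr_h_add_left sr_h_scale_left sr_h_add_right sr_h_scale_right sr_h_diff_left sr_h_diff_right o Fs algebra_simps)
    show ?thesis unfolding cs'(3)[symmetric] cs'(1,2)[symmetric] using h1 h2 h3 h4 Fs(2,6,7,8) sign_sq[OF sg(1)] sign_sq[OF sg(2)]
        sign_sq[OF sg(4)] sign_sq[OF sg(5)] by auto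
  qed
  define q where "q = eN1 * c1 / (et * c2)"
  have q0: "q \<noteq> 0" using c sign_sq[OF sg(2)] sign_sq[OF sg(3)] by (simp add: q_def)
  have muq: "mu s = la s * q" if "s \<in> I" for s
    using key[OF that] c sign_sq[OF sg(3)] by (simp add: q_def field_simps)
  have dmu: "deriv mu s = q" if s: "s \<in> I" for s
  proof -
    have dl: "(la has_field_derivative deriv la s) (at s)"
      using dif[OF s] DERIV_deriv_iff_real_differentiable by blast
    have "((\<lambda>s. la s * q) has_field_derivative deriv la s * q) (at s)"
      by (rule DERIV_cmult_right[OF dl])
    then have "(mu has_field_derivative deriv la s * q) (at s)"
      by (rule has_field_derivative_transform_within_open[OF _ oI s]) (simp add: muq)
    then show ?thesis using key[OF s] by (simp add: DERIV_imp_deriv)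
  qed
  have nuc: "nu s = q / (en2 * c3)" if "s \<in> I" for s
    using key[OF that] dmu[OF that] c sign_sq[OF sg(5)] by (simp add: field_simps)
  have dnu: "deriv nu s = 0" if s: "s \<in> I" for s
  proof -
    have "((\<lambda>s. q / (en2 * c3)) has_field_derivative 0) (at s)" by simp
    then have "(nu has_field_derivative 0) (at s)"
      by (rule has_field_derivative_transform_within_open[OF _ oI s]) (simp add: nuc)
    then show ?thesis by (simp add: DERIV_imp_deriv)
  qed
  have mu0: "mu s = 0" if "s \<in> I" for s
    using key[OF that] dnu[OF that] c sign_sq[OF sg(4)] by auto
  define s0 where "s0 = (a + b) / 2"
  have s0: "s0 \<in> I" using assms(1) by (simp add: I_def s0_def)
  have "(mu has_field_derivative 0) (at s0)"
    by (rule has_field_derivative_transform_within_open[OF _ oI s0, of "\<lambda>_. 0"]) (simp_all add: mu0)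
  then have "deriv mu s0 = 0" by (simp add: DERIV_imp_deriv)
  with dmu[OF s0] q0 show False by simp
qed

end
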